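(* Let $\tilde Q=\|q_{ik}\|$ ($k\in\mathbb N$, $i\in\{0,\dots,N_k-1\}$) define a $\tilde Q$-expansion of $[0,1]$. Suppose that for every sequence of digits $(i_k)_{k\ge1}$ with $i_k\in\{0,\dots,N_k-1\}$, $$\lim_{k\to\infty}\frac{\ln q_{i_kk}}{\ln\bigl(q_{i_11}q_{i_22}\cdots q_{i_{k-1}(k-1)}\bigr)}=0.$$ Then the family $\varPhi$ of interiors of the cylinders of this expansion is faithful for packing dimension calculation: $\dim_P(E,\varPhi)=\dim_{P(\mathit{unc})}(E)$ for every $E\subset[0,1]$.
   Context: $\tilde Q$-expansion: integers $N_k\ge2$, $q_{ik}>0$, $\sum_iq_{ik}=1$, $\prod_k\max_iq_{ik}=0$; with $\beta_{ik}=\sum_{l<i}q_{lk}$ each $x\in[0,1]$ is $x=\sum_k\beta_{a_kk}\prod_{j<k}q_{a_jj}$; the rank-$n$ cylinder $\{x:a_j(x)=c_j,j\le n\}$ is an interval of length $\prod_{j\le n}q_{c_jj}$. In $\mathbb R$: an uncentered $\varepsilon$-packing of $E$ is a countable family of pairwise disjoint open intervals of length $\le\varepsilon$ each meeting $E$; $\mathcal P^\alpha_{\varepsilon(\mathit{unc})}(E)=\sup\sum|E_i|^\alpha$, $\mathcal P^\alpha_{0(\mathit{unc})}=\lim_{\varepsilon\to0}$, $\mathcal P^\alpha_{(\mathit{unc})}(E)=\inf\{\sum_j\mathcal P^\alpha_{0(\mathit{unc})}(E_j):E\subset\bigcup E_j\}$, $\dim_{P(\mathit{unc})}(E)=\inf\{\alpha:\mathcal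 P^\alpha_{(\mathit{unc})}(E)=0\}$; $\dim_P(E,\varPhi)$ is the same using only packings by intervals from $\varPhi$. *)

theory Defs
  imports "HOL-Analysis.Analysis"
begin

text \<open>Q-tilde expansion data: N k (k \<ge> 1) digits at position k, q i k the
  weight of digit i at position k.\<close>

definition Qexp :: "(nat \<Rightarrow> nat) \<Rightarrow> (nat \<Rightarrow> nat \<Rightarrow> real) \<Rightarrow> bool" where
  "Qexp N q \<longleftrightarrow>
     (\<forall>k\<ge>1. N k \<ge> 2) \<and>
     (\<forall>k\<ge>1. \<forall>i<N k. q i k > 0) \<and>
     (\<forall>k\<ge>1. (\<Sum>i<N k. q i k) = 1) \<and>
     (\<lambda>n. \<Prod>k\<in>{1..n}. Max ((\<lambda>i. q i k) ` {..<N k})) \<longlonglongrightarrow> 0"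

definition beta :: "(nat \<Rightarrow> nat \<Rightarrow> real) \<Rightarrow> nat \<Rightarrow> nat \<Rightarrow> real" where
  "beta q i k = (\<Sum>l<i. q l k)"

definition cyl_left :: "(nat \<Rightarrow> nat \<Rightarrow> real) \<Rightarrow> nat \<Rightarrow> (nat \<Rightarrow> nat) \<Rightarrow> real" where
  "cyl_left q n c = (\<Sum>k\<in>{1..n}. beta q (c k) k * (\<Prod>j\<in>{1..<k}. q (c j) j))"

definition cyl_len :: "(nat \<Rightarrow> nat \<Rightarrow> real) \<Rightarrow> nat \<Rightarrow> (nat \<Rightarrow> nat) \<Rightarrow> real" where
  "cyl_len q n c = (\<Prod>j\<in>{1..n}. q (c j) j)"

definition cyl_interiors :: "(nat \<Rightarrow> nat) \<Rightarrow> (nat \<Rightarrow> nat \<Rightarrow> real) \<Rightarrow> real set set" where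
  "cyl_interiors N q =
     {{cyl_left q n c <..< cyl_left q n c + cyl_len q n c} | n c.
        n \<ge> 1 \<and> (\<forall>k\<in>{1..n}. c k < N k)}"

definition open_intervals :: "real set set" where
  "open_intervals = {{a<..<b} | a b. a < b}"

definition ilen :: "real set \<Rightarrow> real" where
  "ilen I = Sup I - Inf I"

definition packing :: "real set set \<Rightarrow> real \<Rightarrow> real set \<Rightarrow> real set set \<Rightarrow> bool" where
  "packing Adm eps E F \<longleftrightarrow> countable F \<and> F \<subseteq> Adm \<and> disjoint F \<and>
     (\<forall>I\<in>F. ilen I \<le> eps \<and> I \<inter> E \<noteq> {})"

definition pack_eps :: "real set set \<Rightarrow> real \<Rightarrow> real \<Rightarrow> real set \<Rightarrow> ennreal" where
  "pack_eps Adm \<alpha> eps E =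
     (SUP F \<in> {F. packing Adm eps E F}. (\<Sum>\<^sub>\<infinity> I\<in>F. ennreal (ilen I powr \<alpha>)))"

definition pack_0 :: "real set set \<Rightarrow> real \<Rightarrow> real set \<Rightarrow> ennreal" where
  "pack_0 Adm \<alpha> E = (INF eps \<in> {0<..}. pack_eps Adm \<alpha> eps E)"

definition pack_measure :: "real set set \<Rightarrow> real \<Rightarrow> real set \<Rightarrow> ennreal" where
  "pack_measure Adm \<alpha> E =
     (INF C \<in> {C :: nat \<Rightarrow> real set. E \<subseteq> (\<Union>j. C j)}. (\<Sum>j. pack_0 Adm \<alpha> (C j)))"

definition pack_dim :: "real set set \<Rightarrow> real set \<Rightarrow> real" where
  "pack_dim Adm E = Inf {\<alpha>. 0 \<le> \<alpha> \<and> pack_measure Adm \<alpha> E = 0}"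

end

theory Submission
  imports Defs
begin

lemma ilen_Ioo: "a < b \<Longrightarrow> ilen {a<..<b} = b - a"
  by (simp add: ilen_def)

lemma packing_mono_adm: "Adm \<subseteq> Adm' \<Longrightarrow> packing Adm eps E F \<Longrightarrow> packing Adm' eps E F"
  unfolding packing_def by auto

lemma packing_mono_set: "E \<subseteq> E' \<Longrightarrow> packing Adm eps E F \<Longrightarrow> packing Adm eps E' F"
  unfolding packing_def by blast

lemma packing_mono_eps: "eps \<le> eps' \<Longrightarrow> packing Adm eps E F \<Longrightarrow> packing Adm eps' E F"
  unfolding packing_def by force

lemma pack_eps_mono_adm: "Adm \<subseteq> Adm' \<Longrightarrow> pack_eps Adm a eps E \<le> pack_eps Adm' a eps E"
  unfolding pack_eps_def by (rule SUP_subset_mono) (auto intro: packing_mono_adm)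

lemma pack_eps_mono_set: "E \<subseteq> E' \<Longrightarrow> pack_eps Adm a eps E \<le> pack_eps Adm a eps E'"
  unfolding pack_eps_def by (rule SUP_subset_mono) (auto intro: packing_mono_set)

lemma pack_eps_mono_eps: "eps \<le> eps' \<Longrightarrow> pack_eps Adm a eps E \<le> pack_eps Adm a eps' E"
  unfolding pack_eps_def by (rule SUP_subset_mono) (auto intro: packing_mono_eps)

lemma pack_0_mono_adm: "Adm \<subseteq> Adm' \<Longrightarrow> pack_0 Adm a E \<le> pack_0 Adm' a E"
  unfolding pack_0_def by (rule INF_mono) (auto intro: pack_eps_mono_adm)

lemma pack_0_mono_set: "E \<subseteq> E' \<Longrightarrow> pack_0 Adm a E \<le> pack_0 Adm a E'"
  unfolding pack_0_def by (rule INF_mono) (auto intro: pack_eps_mono_set)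

lemma pack_0_le_eps: "eps > 0 \<Longrightarrow> pack_0 Adm a E \<le> pack_eps Adm a eps E"
  unfolding pack_0_def by (rule INF_lower) auto

lemma pack_measure_mono_adm: "Adm \<subseteq> Adm' \<Longrightarrow> pack_measure Adm a E \<le> pack_measure Adm' a E"
  unfolding pack_measure_def
  by (rule INF_mono) (auto intro!: suminf_le pack_0_mono_adm)

lemma pack_measure_mono_set: "A \<subseteq> B \<Longrightarrow> pack_measure Adm a A \<le> pack_measure Adm a B"
  unfolding pack_measure_def by (rule INF_superset_mono) auto

lemma pack_measure_lt:
  assumes "pack_measure Adm a E < y"
  shows "\<exists>C. E \<subseteq> (\<Union>j. C j) \<and> (\<Sum>j. pack_0 Adm a (C j)) < y"
  using assms unfolding pack_measure_def by (simp add: INF_less_iff)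

lemma pack_measure_le:
  assumes "E \<subseteq> (\<Union>j. C j)"
  shows "pack_measure Adm a E \<le> (\<Sum>j. pack_0 Adm a (C j))"
  unfolding pack_measure_def by (rule INF_lower) (use assms in auto)

lemma ennreal_zero_if_le_eps:
  fixes x :: ennreal
  assumes "\<And>e. e > 0 \<Longrightarrow> x \<le> ennreal e"
  shows "x = 0"
proof -
  have "x \<le> 0"
    by (rule ennreal_le_epsilon) (use assms in auto)
  then show ?thesis by simp
qed

lemma pm_union_zero:
  fixes A :: "nat \<Rightarrow> real set"
  assumes "\<And>m. pack_measure Adm a (A m) = 0"
  shows "pack_measure Adm a (\<Union>m. A m) = 0"
proof (rule ennreal_zero_if_le_eps)
  fix e :: real assume e: "e > 0"
  have "\<forall>m. \<exists>C. A m \<subseteq> (\<Union>j. C j) \<and> (\<Sum>j. pack_0 Adm a (C j)) < ennreal (e / 2 ^ Suc m)"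
  proof
    fix m
    have "pack_measure Adm a (A m) < ennreal (e / 2 ^ Suc m)"
      using assms e by simp
    then show "\<exists>C. A m \<subseteq> (\<Union>j. C j) \<and> (\<Sum>j. pack_0 Adm a (C j)) < ennreal (e / 2 ^ Suc m)"
      by (rule pack_measure_lt)
  qed
  then obtain Cv where Cv: "\<And>m. A m \<subseteq> (\<Union>j. Cv m j)"
    "\<And>m. (\<Sum>j. pack_0 Adm a (Cv m j)) < ennreal (e / 2 ^ Suc m)"
    by metis
  define D where "D k = Cv (fst (prod_decode k)) (snd (prod_decode k))" for k
  have cov: "(\<Union>m. A m) \<subseteq> (\<Union>k. D k)"
  proof
    fix x assume "x \<in> (\<Union>m. A m)"
    then obtain m j where "x \<in> Cv m j" using Cv(1) by blast
    then have "x \<in> D (prod_encode (m, j))" by (simp add: D_def)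
    then show "x \<in> (\<Union>k. D k)" by blast
  qed
  have sm: "(\<lambda>m. e / 2 ^ Suc m) sums e"
  proof -
    have "(\<lambda>m. e / 2 ^ Suc m) = (\<lambda>m. (e/2) * (1/2) ^ m)"
      by (auto simp: field_simps power_divide)
    moreover have "(\<lambda>m. (1/2::real) ^ m) sums 2" using geometric_sums[of "1/2::real"] by simp
    ultimately show ?thesis using sums_mult[of "\<lambda>m. (1/2::real) ^ m" 2 "e/2"] by simp
  qed
  have "(\<Sum>k. pack_0 Adm a (D k)) = (\<Sum>m. (\<Sum>j. pack_0 Adm a (Cv m j)))"
    unfolding D_def
    using suminf_ennreal_2dimen[of "\<lambda>m. (\<Sum>j. pack_0 Adm a (Cv m j))" "\<lambda>p. pack_0 Adm a (Cv (fst p) (snd p))"]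
    by simp
  also have "\<dots> \<le> (\<Sum>m. ennreal (e / 2 ^ Suc m))"
    by (intro suminf_le) (use Cv(2) in \<open>auto intro: less_imp_le\<close>)
  also have "(\<Sum>m. ennreal (e / 2 ^ Suc m)) = ennreal (\<Sum>m. e / 2 ^ Suc m)"
    by (rule suminf_ennreal2) (use e sm in \<open>auto intro: sums_summable\<close>)
  also have "(\<Sum>m. e / 2 ^ Suc m) = e" using sm sums_unique by metis
  finally show "pack_measure Adm a (\<Union>m. A m) \<le> ennreal e"
    using pack_measure_le[OF cov] order_trans by blast
qed

lemma pm_Un_zero:
  assumes "pack_measure Adm a A = 0" "pack_measure Adm a B = 0"
  shows "pack_measure Adm a (A \<union> B) = 0"
proof -
  have "A \<union> B = (\<Union>m::nat. if m = 0 then A else B)" by (auto split: if_splits)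
  then show ?thesis using pm_union_zero[of Adm a "\<lambda>m::nat. if m = 0 then A else B"] assms by simp
qed

lemma pm_empty: "pack_measure Adm a {} = 0"
proof -
  have "pack_measure Adm a {} \<le> (\<Sum>j. pack_0 Adm a ({} :: real set))"
    by (rule pack_measure_le) auto
  moreover have "pack_0 Adm a {} = 0"
  proof -
    have "pack_eps Adm a 1 {} = 0"
    proof -
      have "{F. packing Adm 1 {} F} = {{}}" unfolding packing_def by (auto simp: disjoint_def)
      then show ?thesis unfolding pack_eps_def by simp
    qed
    then show ?thesis using pack_0_le_eps[of 1 Adm a "{}"] by simp
  qed
  ultimately show ?thesis by simp
qed

lemma pm_countable_zero:
  assumes "countable I" "\<And>i. i \<in> I \<Longrightarrow> pack_measure Adm a (A i) = 0"
  shows "pack_measure Adm a (\<Union>i\<in>I. A i) = 0"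
proof (cases "I = {}")
  case True then show ?thesis by (simp add: pm_empty)
next
  case False
  have "(\<Union>i\<in>I. A i) = (\<Union>m. A (from_nat_into I m))"
    using from_nat_into[OF False] from_nat_into_surj[OF assms(1)] by (auto; metis)
  then show ?thesis using pm_union_zero[of Adm a "\<lambda>m. A (from_nat_into I m)"] assms(2)
      from_nat_into[OF False] by simp
qed

lemma pack_eps_singleton:
  assumes "a \<ge> 0" "eps > 0"
  shows "pack_eps open_intervals a eps {x} \<le> ennreal (eps powr a)"
  unfolding pack_eps_def
proof (rule SUP_least)
  fix F assume "F \<in> {F. packing open_intervals eps {x} F}"
  then have F: "packing open_intervals eps {x} F" by simp
  have sub: "\<And>I J. I \<in> F \<Longrightarrow> J \<in> F \<Longrightarrow> I = J"
    using F unfolding packing_def disjoint_def by blast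
  show "(\<Sum>\<^sub>\<infinity>I\<in>F. ennreal (ilen I powr a)) \<le> ennreal (eps powr a)"
  proof (cases "F = {}")
    case True then show ?thesis by simp
  next
    case False
    then obtain I where I: "I \<in> F" by blast
    then have "F = {I}" using sub by blast
    moreover have "ilen I powr a \<le> eps powr a"
    proof -
      obtain l u where "I = {l<..<u}" "l < u" using F I unfolding packing_def open_intervals_def by blast
      moreover have "ilen I \<le> eps" using F I unfolding packing_def by blast
      ultimately show ?thesis using assms by (intro powr_mono2) (auto simp: ilen_Ioo)
    qed
    ultimately show ?thesis by (simp add: ennreal_leI)
  qed
qed

lemma pm_singleton:
  assumes "a > 0"
  shows "pack_measure open_intervals a {x} = 0"
proof -
  have p0: "pack_0 open_intervals a {x} = 0"
  proof (rule ennreal_zero_if_le_eps)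
    fix e :: real assume e: "e > 0"
    have "pack_0 open_intervals a {x} \<le> pack_eps open_intervals a (e powr (1/a)) {x}"
      by (rule pack_0_le_eps) (use e in simp)
    also have "\<dots> \<le> ennreal ((e powr (1/a)) powr a)"
      by (rule pack_eps_singleton) (use e assms in auto)
    also have "(e powr (1/a)) powr a = e" using assms e by (simp add: powr_powr)
    finally show "pack_0 open_intervals a {x} \<le> ennreal e" .
  qed
  have "pack_measure open_intervals a {x} \<le> (\<Sum>j. pack_0 open_intervals a (if j = 0 then {x} else {}))"
    by (rule pack_measure_le) auto
  also have "\<dots> = 0"
  proof -
    have "\<And>j. pack_0 open_intervals a (if j = (0::nat) then {x} else {}) = 0"
    proof -
      fix j :: nat
      have "pack_0 open_intervals a {} \<le> pack_0 open_intervals a {x}" by (rule pack_0_mono_set) auto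
      then show "pack_0 open_intervals a (if j = (0::nat) then {x} else {}) = 0" using p0 by auto
    qed
    then show ?thesis by simp
  qed
  finally show ?thesis by simp
qed

lemma open_interval_cases:
  assumes "I \<in> open_intervals"
  obtains l u where "I = {l<..<u}" "l < u"
  using assms unfolding open_intervals_def by blast

lemma count7:
  fixes A :: "real set set"
  assumes fin: "finite A" and AO: "A \<subseteq> open_intervals" and dA: "disjoint A"
    and len: "\<And>I. I \<in> A \<Longrightarrow> h/2 < ilen I \<and> ilen I \<le> h"
    and meet: "\<And>I. I \<in> A \<Longrightarrow> I \<inter> {x-h<..<x+h} \<noteq> {}"
    and h: "h > 0"
  shows "card A \<le> 7"
proof (rule ccontr)
  assume "\<not> card A \<le> 7"
  then have c8: "card A \<ge> 8" by simp
  then have neA: "A \<noteq> {}" by auto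
  have sub: "\<And>I. I \<in> A \<Longrightarrow> I \<subseteq> {x-2*h..x+2*h}"
  proof -
    fix I assume I: "I \<in> A"
    obtain l u where lu: "I = {l<..<u}" "l < u" using AO I open_interval_cases by blast
    obtain y where y: "y \<in> I" "x - h < y" "y < x + h" using meet[OF I] by auto
    have "u - l \<le> h" using len[OF I] lu by (simp add: ilen_Ioo)
    then show "I \<subseteq> {x-2*h..x+2*h}" using y lu by auto
  qed
  have sets: "\<And>I. I \<in> A \<Longrightarrow> I \<in> sets lborel"
  proof -
    fix I assume "I \<in> A"
    then obtain l u where "I = {l<..<u}" using AO open_interval_cases by blast
    then show "I \<in> sets lborel" by simp
  qed
  have meas: "\<And>I. I \<in> A \<Longrightarrow> measure lborel I = ilen I"
  proof -
    fix I assume "I \<in> A"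
    then obtain l u where "I = {l<..<u}" "l < u" using AO open_interval_cases by blast
    then show "measure lborel I = ilen I" by (simp add: ilen_Ioo)
  qed
  have fin_em: "\<And>I. I \<in> A \<Longrightarrow> emeasure lborel I \<noteq> \<infinity>"
  proof -
    fix I assume "I \<in> A"
    then obtain l u where "I = {l<..<u}" "l < u" using AO open_interval_cases by blast
    then show "emeasure lborel I \<noteq> \<infinity>" by simp
  qed
  have "measure lborel (\<Union>I\<in>A. id I) = (\<Sum>I\<in>A. measure lborel (id I))"
    by (rule measure_finite_Union) (use fin sets fin_em dA in \<open>auto simp: disjoint_family_on_def disjoint_def\<close>)
  then have eq: "measure lborel (\<Union>A) = (\<Sum>I\<in>A. ilen I)" using meas by simp
  have "measure lborel (\<Union>A) \<le> measure lborel {x-2*h..x+2*h}"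
    by (rule measure_mono_fmeasurable) (use sub sets fin in \<open>auto intro: fmeasurable_compact\<close>)
  also have "\<dots> = 4 * h" using h by simp
  finally have le: "(\<Sum>I\<in>A. ilen I) \<le> 4 * h" using eq by simp
  have "(\<Sum>I\<in>A. h/2) < (\<Sum>I\<in>A. ilen I)"
    by (rule sum_strict_mono) (use fin neA len in auto)
  then have "real (card A) * (h/2) < 4 * h" using le by simp
  moreover have "real (card A) * (h/2) \<ge> 8 * (h/2)" using c8 h by (intro mult_right_mono) auto
  ultimately show False by simp
qed

lemma level_exists:
  fixes d :: real assumes "0 < d" "d \<le> 1"
  shows "\<exists>l. (1/2)^(Suc l) < d \<and> d \<le> (1/2)^l"
proof -
  obtain n where n: "(1/2::real)^n < d" using real_arch_pow_inv[of d "1/2"] assms by auto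
  have "(1/2::real)^(Suc n) \<le> (1/2)^n" by (simp add: power_decreasing)
  then have ex: "\<exists>l. (1/2::real)^(Suc l) < d" using n by (meson le_less_trans)
  define l where "l = (LEAST l. (1/2::real)^(Suc l) < d)"
  have A: "(1/2::real)^(Suc l) < d" unfolding l_def by (rule LeastI_ex[OF ex])
  have B: "d \<le> (1/2)^l"
  proof (cases l)
    case 0 then show ?thesis using assms by simp
  next
    case (Suc m)
    then have "m < l" by simp
    then have "\<not> (1/2::real)^(Suc m) < d" unfolding l_def by (rule not_less_Least)
    then show ?thesis using Suc by simp
  qed
  show ?thesis using A B by blast
qed

lemma half_pow_powr:
  assumes "eta > 0"
  shows "((1/2::real)^l) powr eta = ((1/2) powr eta)^l"
proof -
  have "((1/2::real)^l) = (1/2) powr (real l)" by (simp add: powr_realpow)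
  then have "((1/2::real)^l) powr eta = (1/2) powr (real l * eta)" by (simp add: powr_powr)
  also have "\<dots> = ((1/2) powr eta)^l" by (simp add: powr_power)
  finally show ?thesis .
qed

lemma comb:
  fixes Phi F :: "real set set" and g :: "real set \<Rightarrow> real set" and T :: "real set"
  assumes lam: "\<And>A B. A \<in> Phi \<Longrightarrow> B \<in> Phi \<Longrightarrow> A \<subseteq> B \<or> B \<subseteq> A \<or> A \<inter> B = {}"
    and PhiO: "Phi \<subseteq> open_intervals"
    and finF: "finite F" and FO: "F \<subseteq> open_intervals" and dF: "disjoint F"
    and Fe: "\<And>I. I \<in> F \<Longrightarrow> ilen I \<le> eps" and eps1: "eps \<le> 1"
    and gI: "\<And>I. I \<in> F \<Longrightarrow> g I \<in> Phi \<and> g I \<inter> T \<noteq> {} \<and> g I \<inter> I \<noteq> {} \<and> ilen (g I) \<le> ilen I"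
    and gw: "\<And>I. I \<in> F \<Longrightarrow> ilen I powr a' \<le> ilen (g I) powr a * ilen I powr eta"
    and eta: "eta > 0"
    and P: "\<And>G. finite G \<Longrightarrow> packing Phi eps T G \<Longrightarrow> (\<Sum>J\<in>G. ilen J powr a) \<le> P"
  shows "(\<Sum>I\<in>F. ilen I powr a') \<le> 49 / (1 - (1/2) powr eta) * P"
proof -
  define r where "r = (1/2::real) powr eta"
  have r0: "0 < r" by (simp add: r_def)
  have r1: "r < 1"
  proof -
    have "r = 1 / 2 powr eta" by (simp add: r_def powr_divide)
    moreover have "2 powr eta > 1" using eta by simp
    ultimately show ?thesis by simp
  qed
  have P0: "0 \<le> P" using P[of "{}"] by (simp add: packing_def)
  have Fpos: "\<And>I. I \<in> F \<Longrightarrow> 0 < ilen I"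
    using FO open_interval_cases by (metis diff_gt_0_iff_gt ilen_Ioo subsetD)
  have "\<forall>I\<in>F. \<exists>l. (1/2::real)^(Suc l) < ilen I \<and> ilen I \<le> (1/2)^l"
    using level_exists Fpos Fe eps1 by (meson order_trans)
  then obtain lev where lev: "\<And>I. I \<in> F \<Longrightarrow> (1/2::real)^(Suc (lev I)) < ilen I \<and> ilen I \<le> (1/2)^(lev I)"
    by metis
  define Fl where "Fl l = {I \<in> F. lev I = l}" for l
  have level: "(\<Sum>I\<in>Fl l. ilen I powr a') \<le> r^l * (49 * P)" for l
  proof -
    define h where "h = (1/2::real)^l"
    have h: "h > 0" by (simp add: h_def)
    have FlF: "Fl l \<subseteq> F" by (auto simp: Fl_def)
    have finFl: "finite (Fl l)" using finF FlF finite_subset by blast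
    have lenI: "\<And>I. I \<in> Fl l \<Longrightarrow> h/2 < ilen I \<and> ilen I \<le> h"
      using lev by (auto simp: Fl_def h_def)
    define JJ where "JJ = g ` Fl l"
    have finJJ: "finite JJ" using finFl by (simp add: JJ_def)
    have JJPhi: "JJ \<subseteq> Phi" using gI FlF by (auto simp: JJ_def)
    have hpow: "\<And>I. I \<in> Fl l \<Longrightarrow> ilen I powr eta \<le> r^l"
    proof -
      fix I assume I: "I \<in> Fl l"
      have "ilen I powr eta \<le> h powr eta"
        using lenI[OF I] eta Fpos I FlF by (intro powr_mono2) auto
      also have "\<dots> = r^l" using half_pow_powr[OF eta] by (simp add: h_def r_def)
      finally show "ilen I powr eta \<le> r^l" .
    qed
    have cnt: "card {I \<in> Fl l. J \<subseteq> g I} \<le> 7" if J: "J \<in> JJ" for J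
    proof -
      obtain lj uj where luj: "J = {lj<..<uj}" "lj < uj" using J JJPhi PhiO open_interval_cases by blast
      define x where "x = (lj + uj) / 2"
      have x: "x \<in> J" using luj by (auto simp: x_def)
      show ?thesis
      proof (rule count7[where x = x and h = h])
        show "finite {I \<in> Fl l. J \<subseteq> g I}" using finFl by simp
        show "{I \<in> Fl l. J \<subseteq> g I} \<subseteq> open_intervals" using FlF FO by auto
        show "disjoint {I \<in> Fl l. J \<subseteq> g I}" using dF FlF unfolding disjoint_def by blast
        show "\<And>I. I \<in> {I \<in> Fl l. J \<subseteq> g I} \<Longrightarrow> h / 2 < ilen I \<and> ilen I \<le> h" using lenI by auto
        show "h > 0" using h .
        fix I assume I: "I \<in> {I \<in> Fl l. J \<subseteq> g I}"
        then have IF: "I \<in> F" using FlF by auto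
        obtain y where y: "y \<in> g I" "y \<in> I" using gI[OF IF] by blast
        obtain lg ug where lug: "g I = {lg<..<ug}" "lg < ug"
          using gI[OF IF] PhiO open_interval_cases by blast
        have "ug - lg \<le> ilen I" using gI[OF IF] lug by (auto simp: ilen_Ioo)
        moreover have "ilen I \<le> h" using lenI I by blast
        ultimately have "ug - lg \<le> h" by linarith
        moreover have "x \<in> g I" using I x by auto
        ultimately have "x - h < y \<and> y < x + h" using y lug by auto
        then show "I \<inter> {x - h<..<x + h} \<noteq> {}" using y by auto
      qed
    qed
    define ht where "ht J = card {J' \<in> JJ. J \<subseteq> J'}" for J
    have ht17: "ht J \<in> {1..7}" if J: "J \<in> JJ" for J
    proof -
      have "{J' \<in> JJ. J \<subseteq> J'} \<subseteq> g ` {I \<in> Fl l. J \<subseteq> g I}" by (auto simp: JJ_def)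
      then have "ht J \<le> card (g ` {I \<in> Fl l. J \<subseteq> g I})"
        unfolding ht_def using finFl by (intro card_mono) auto
      also have "\<dots> \<le> card {I \<in> Fl l. J \<subseteq> g I}" by (rule card_image_le) (use finFl in auto)
      also have "\<dots> \<le> 7" using cnt[OF J] .
      finally have "ht J \<le> 7" .
      moreover have "ht J \<ge> 1"
      proof -
        have "J \<in> {J' \<in> JJ. J \<subseteq> J'}" using J by auto
        then have "card {J' \<in> JJ. J \<subseteq> J'} > 0" using finJJ by (auto simp: card_gt_0_iff)
        then show ?thesis by (simp add: ht_def)
      qed
      ultimately show ?thesis by auto
    qed
    have anti: "J1 \<inter> J2 = {}" if J: "J1 \<in> JJ" "J2 \<in> JJ" "ht J1 = ht J2" "J1 \<noteq> J2" for J1 J2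
    proof (rule ccontr)
      assume ne: "J1 \<inter> J2 \<noteq> {}"
      have strict: "ht B < ht A" if AB: "A \<in> JJ" "B \<in> JJ" "A \<subseteq> B" "A \<noteq> B" for A B
      proof -
        have "{J' \<in> JJ. B \<subseteq> J'} \<subset> {J' \<in> JJ. A \<subseteq> J'}"
        proof
          show "{J' \<in> JJ. B \<subseteq> J'} \<subseteq> {J' \<in> JJ. A \<subseteq> J'}" using AB by auto
          show "{J' \<in> JJ. B \<subseteq> J'} \<noteq> {J' \<in> JJ. A \<subseteq> J'}" using AB by blast
        qed
        then show ?thesis unfolding ht_def by (rule psubset_card_mono[rotated]) (use finJJ in simp)
      qed
      from lam[of J1 J2] J JJPhi ne have "J1 \<subseteq> J2 \<or> J2 \<subseteq> J1" by auto
      then show False using strict[of J1 J2] strict[of J2 J1] J by auto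
    qed
    have cls: "(\<Sum>J\<in>{J \<in> JJ. ht J = c}. ilen J powr a) \<le> P" for c
    proof (rule P)
      show "finite {J \<in> JJ. ht J = c}" using finJJ by simp
      show "packing Phi eps T {J \<in> JJ. ht J = c}"
        unfolding packing_def
      proof (intro conjI)
        show "countable {J \<in> JJ. ht J = c}" using finJJ by (simp add: countable_finite)
        show "{J \<in> JJ. ht J = c} \<subseteq> Phi" using JJPhi by auto
        show "disjoint {J \<in> JJ. ht J = c}" unfolding disjoint_def using anti by auto
        show "\<forall>I\<in>{J \<in> JJ. ht J = c}. ilen I \<le> eps \<and> I \<inter> T \<noteq> {}"
          using gI Fe FlF by (fastforce simp: JJ_def)
      qed
    qed
    have wnn: "\<And>J. 0 \<le> ilen J powr a" by simp
    have s1: "(\<Sum>J\<in>JJ. ilen J powr a) \<le> 7 * P"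
    proof -
      have "(\<Sum>J\<in>JJ. ilen J powr a) = (\<Sum>c\<in>ht`JJ. \<Sum>J\<in>{J \<in> JJ. ht J = c}. ilen J powr a)"
        by (rule sum.image_gen[OF finJJ])
      also have "\<dots> \<le> (\<Sum>c\<in>ht`JJ. P)" by (rule sum_mono) (rule cls)
      also have "\<dots> = real (card (ht`JJ)) * P" by simp
      also have "\<dots> \<le> 7 * P"
      proof -
        have "card (ht`JJ) \<le> card {1..7::nat}" by (rule card_mono) (use ht17 in auto)
        then have "real (card (ht`JJ)) \<le> 7" by simp
        then show ?thesis using P0 by (intro mult_right_mono) auto
      qed
      finally show ?thesis .
    qed
    have s2: "(\<Sum>I\<in>Fl l. ilen (g I) powr a) \<le> 7 * (\<Sum>J\<in>JJ. ilen J powr a)"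
    proof -
      have "(\<Sum>I\<in>Fl l. ilen (g I) powr a) = (\<Sum>J\<in>JJ. \<Sum>I\<in>{I \<in> Fl l. g I = J}. ilen (g I) powr a)"
        unfolding JJ_def by (rule sum.image_gen[OF finFl])
      also have "\<dots> = (\<Sum>J\<in>JJ. real (card {I \<in> Fl l. g I = J}) * ilen J powr a)"
        by (rule sum.cong) auto
      also have "\<dots> \<le> (\<Sum>J\<in>JJ. 7 * ilen J powr a)"
      proof (rule sum_mono)
        fix J assume J: "J \<in> JJ"
        have "card {I \<in> Fl l. g I = J} \<le> card {I \<in> Fl l. J \<subseteq> g I}"
          by (rule card_mono) (use finFl in auto)
        then have "real (card {I \<in> Fl l. g I = J}) \<le> 7" using cnt[OF J] by simp
        then show "real (card {I \<in> Fl l. g I = J}) * ilen J powr a \<le> 7 * ilen J powr a"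
          by (intro mult_right_mono) auto
      qed
      also have "\<dots> = 7 * (\<Sum>J\<in>JJ. ilen J powr a)" by (simp add: sum_distrib_left)
      finally show ?thesis .
    qed
    have "(\<Sum>I\<in>Fl l. ilen I powr a') \<le> (\<Sum>I\<in>Fl l. ilen (g I) powr a * r^l)"
    proof (rule sum_mono)
      fix I assume I: "I \<in> Fl l"
      have "ilen I powr a' \<le> ilen (g I) powr a * ilen I powr eta" using gw I FlF by auto
      also have "\<dots> \<le> ilen (g I) powr a * r^l" using hpow[OF I] by (intro mult_left_mono) auto
      finally show "ilen I powr a' \<le> ilen (g I) powr a * r^l" .
    qed
    also have "\<dots> = r^l * (\<Sum>I\<in>Fl l. ilen (g I) powr a)" by (simp add: sum_distrib_left mult.commute)
    also have "\<dots> \<le> r^l * (7 * (7 * P))"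
      using s1 s2 r0 by (intro mult_left_mono) auto
    finally show ?thesis by simp
  qed
  have "(\<Sum>I\<in>F. ilen I powr a') = (\<Sum>l\<in>lev`F. \<Sum>I\<in>Fl l. ilen I powr a')"
    unfolding Fl_def by (rule sum.image_gen[OF finF])
  also have "\<dots> \<le> (\<Sum>l\<in>lev`F. r^l * (49 * P))" by (rule sum_mono) (rule level)
  also have "\<dots> = (49 * P) * (\<Sum>l\<in>lev`F. r^l)" by (simp add: sum_distrib_right mult.commute)
  also have "\<dots> \<le> (49 * P) * (1 / (1 - r))"
  proof (rule mult_left_mono)
    define M where "M = Suc (Max (lev`F))"
    have "lev`F \<subseteq> {..<M}"
      using finF by (auto simp: M_def le_imp_less_Suc)
    then have "(\<Sum>l\<in>lev`F. r^l) \<le> (\<Sum>l<M. r^l)"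
      using r0 by (intro sum_mono2) auto
    also have "\<dots> = (1 - r^M) / (1 - r)" using r1 by (simp add: sum_gp_strict)
    also have "\<dots> \<le> 1 / (1 - r)" using r0 r1 by (intro divide_right_mono) auto
    finally show "(\<Sum>l\<in>lev`F. r^l) \<le> 1 / (1 - r)" .
  qed (use P0 in auto)
  also have "\<dots> = 49 / (1 - (1/2) powr eta) * P" by (simp add: r_def)
  finally show ?thesis .
qed

definition valid :: "(nat \<Rightarrow> nat) \<Rightarrow> nat \<Rightarrow> (nat \<Rightarrow> nat) \<Rightarrow> bool" where
  "valid N n c \<longleftrightarrow> (\<forall>k\<in>{1..n}. c k < N k)"

definition cint :: "(nat \<Rightarrow> nat \<Rightarrow> real) \<Rightarrow> nat \<Rightarrow> (nat \<Rightarrow> nat) \<Rightarrow> real set" where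
  "cint q n c = {cyl_left q n c <..< cyl_left q n c + cyl_len q n c}"

lemma cyl_0[simp]: "cyl_len q 0 c = 1" "cyl_left q 0 c = 0"
  by (simp_all add: cyl_len_def cyl_left_def)

lemma cyl_len_Suc: "cyl_len q (Suc n) c = cyl_len q n c * q (c (Suc n)) (Suc n)"
  by (simp add: cyl_len_def prod.cl_ivl_Suc)

lemma cyl_left_Suc: "cyl_left q (Suc n) c = cyl_left q n c + beta q (c (Suc n)) (Suc n) * cyl_len q n c"
  by (simp add: cyl_left_def cyl_len_def sum.cl_ivl_Suc atLeastLessThanSuc_atLeastAtMost)

lemma cyl_cong:
  assumes "\<And>k. k \<in> {1..n} \<Longrightarrow> c k = d k"
  shows "cyl_left q n c = cyl_left q n d" "cyl_len q n c = cyl_len q n d"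
proof -
  show "cyl_left q n c = cyl_left q n d"
    unfolding cyl_left_def
    by (intro sum.cong refl arg_cong2[where f="(*)"] prod.cong) (use assms in auto)
  show "cyl_len q n c = cyl_len q n d"
    unfolding cyl_len_def by (intro prod.cong) (use assms in auto)
qed

lemma cint_cong: "(\<And>k. k \<in> {1..n} \<Longrightarrow> c k = d k) \<Longrightarrow> cint q n c = cint q n d"
  unfolding cint_def using cyl_cong by metis

lemma valid_mono: "valid N m c \<Longrightarrow> n \<le> m \<Longrightarrow> valid N n c"
  unfolding valid_def by auto

lemma beta_Suc: "beta q (Suc i) k = beta q i k + q i k"
  by (simp add: beta_def)

context
  fixes N :: "nat \<Rightarrow> nat" and q :: "nat \<Rightarrow> nat \<Rightarrow> real"
  assumes Q: "Qexp N q"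
begin

lemma N_ge2: "k \<ge> 1 \<Longrightarrow> N k \<ge> 2" using Q by (simp add: Qexp_def)
lemma q_pos: "k \<ge> 1 \<Longrightarrow> i < N k \<Longrightarrow> q i k > 0" using Q by (simp add: Qexp_def)
lemma q_sum: "k \<ge> 1 \<Longrightarrow> (\<Sum>i<N k. q i k) = 1" using Q by (simp add: Qexp_def)

lemma q_lt1:
  assumes "k \<ge> 1" "i < N k"
  shows "q i k < 1"
proof -
  obtain j where j: "j < N k" "j \<noteq> i"
    using N_ge2[OF assms(1)] assms(2) by (metis One_nat_def Suc_1 Suc_le_lessD less_one linorder_neqE_nat not_less_zero)
  have "(\<Sum>l\<in>{i,j}. q l k) \<le> (\<Sum>l<N k. q l k)"
    by (rule sum_mono2) (use assms j q_pos in \<open>auto intro: less_imp_le\<close>)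
  then show ?thesis using q_sum[OF assms(1)] q_pos[OF assms(1) j(1)] j(2) by simp
qed

lemma beta_mono:
  assumes "k \<ge> 1" "i \<le> j" "j \<le> N k"
  shows "beta q i k \<le> beta q j k"
  unfolding beta_def
  by (rule sum_mono2) (use assms q_pos in \<open>auto intro: less_imp_le\<close>)

lemma beta_nonneg: "k \<ge> 1 \<Longrightarrow> i \<le> N k \<Longrightarrow> beta q i k \<ge> 0"
  using beta_mono[of k 0 i] by (simp add: beta_def)

lemma beta_N: "k \<ge> 1 \<Longrightarrow> beta q (N k) k = 1"
  using q_sum by (simp add: beta_def)

lemma beta_q_le1: "k \<ge> 1 \<Longrightarrow> i < N k \<Longrightarrow> beta q i k + q i k \<le> 1"
  using beta_mono[of k "Suc i" "N k"] beta_N by (simp add: beta_Suc)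

lemma cyl_len_pos: "valid N n c \<Longrightarrow> cyl_len q n c > 0"
  unfolding cyl_len_def valid_def by (rule prod_pos) (auto intro: q_pos)

lemma cyl_len_Suc_le: "valid N (Suc n) c \<Longrightarrow> cyl_len q (Suc n) c \<le> cyl_len q n c"
  using cyl_len_pos[of n c] q_lt1[of "Suc n" "c (Suc n)"] valid_mono[of N "Suc n" c n]
  by (auto simp: cyl_len_Suc valid_def mult_le_cancel_left1)

lemma cyl_len_antimono:
  assumes "n \<le> m" "valid N m c"
  shows "cyl_len q m c \<le> cyl_len q n c"
  using assms
proof (induction m rule: dec_induct)
  case base then show ?case by simp
next
  case (step m)
  then show ?case using cyl_len_Suc_le[of m c] valid_mono[of N "Suc m" c m] by force
qed

lemma cyl_nest_Suc:
  assumes "valid N (Suc n) c"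
  shows "cyl_left q n c \<le> cyl_left q (Suc n) c"
    "cyl_left q (Suc n) c + cyl_len q (Suc n) c \<le> cyl_left q n c + cyl_len q n c"
proof -
  have v: "valid N n c" using assms valid_mono by (metis le_SucI order_refl)
  have d: "c (Suc n) < N (Suc n)" using assms by (simp add: valid_def)
  have L: "cyl_len q n c > 0" using cyl_len_pos[OF v] .
  have b: "beta q (c (Suc n)) (Suc n) \<ge> 0" using beta_nonneg[of "Suc n"] d by simp
  show "cyl_left q n c \<le> cyl_left q (Suc n) c"
    using L b by (simp add: cyl_left_Suc)
  have "beta q (c (Suc n)) (Suc n) * cyl_len q n c + cyl_len q n c * q (c (Suc n)) (Suc n)
        = (beta q (c (Suc n)) (Suc n) + q (c (Suc n)) (Suc n)) * cyl_len q n c"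
    by (simp add: algebra_simps)
  also have "\<dots> \<le> 1 * cyl_len q n c"
    using beta_q_le1[of "Suc n" "c (Suc n)"] d L by (intro mult_right_mono) auto
  finally show "cyl_left q (Suc n) c + cyl_len q (Suc n) c \<le> cyl_left q n c + cyl_len q n c"
    by (simp add: cyl_left_Suc cyl_len_Suc)
qed

lemma cyl_nest:
  assumes "n \<le> m" "valid N m c"
  shows "cyl_left q n c \<le> cyl_left q m c \<and>
         cyl_left q m c + cyl_len q m c \<le> cyl_left q n c + cyl_len q n c"
  using assms
proof (induction m rule: dec_induct)
  case base then show ?case by simp
next
  case (step m)
  then show ?case using cyl_nest_Suc[of m c] valid_mono[of N "Suc m" c m] by force
qed

lemma cint_nest: "n \<le> m \<Longrightarrow> valid N m c \<Longrightarrow> cint q m c \<subseteq> cint q n c"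
  using cyl_nest[of n m c] unfolding cint_def by auto

lemma cint_sibling:
  assumes "valid N (Suc n) c" "valid N (Suc n) d" "\<And>k. k \<in> {1..n} \<Longrightarrow> c k = d k"
    "c (Suc n) < d (Suc n)"
  shows "cint q (Suc n) c \<inter> cint q (Suc n) d = {}"
proof -
  have v: "valid N n c" using assms valid_mono by (metis le_SucI order_refl)
  have L: "cyl_len q n c > 0" using cyl_len_pos[OF v] .
  have e: "cyl_left q n c = cyl_left q n d" "cyl_len q n c = cyl_len q n d"
    using cyl_cong[of n c d q] assms(3) by auto
  have dd: "d (Suc n) \<le> N (Suc n)" using assms(2) by (simp add: valid_def less_imp_le)
  have "beta q (c (Suc n)) (Suc n) + q (c (Suc n)) (Suc n) = beta q (Suc (c (Suc n))) (Suc n)"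
    by (simp add: beta_Suc)
  also have "\<dots> \<le> beta q (d (Suc n)) (Suc n)"
    using assms(4) dd by (intro beta_mono) auto
  finally have "(beta q (c (Suc n)) (Suc n) + q (c (Suc n)) (Suc n)) * cyl_len q n c
      \<le> beta q (d (Suc n)) (Suc n) * cyl_len q n c"
    using L by (intro mult_right_mono) auto
  then have "cyl_left q (Suc n) c + cyl_len q (Suc n) c \<le> cyl_left q (Suc n) d"
    using e by (simp add: cyl_left_Suc cyl_len_Suc algebra_simps)
  then show ?thesis unfolding cint_def by auto
qed

lemma cint_laminar_le:
  assumes "n \<le> m" "valid N n c" "valid N m d"
  shows "cint q m d \<subseteq> cint q n c \<or> cint q n c \<inter> cint q m d = {}"
proof (cases "\<forall>k\<in>{1..n}. c k = d k")
  case True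
  then have "cint q n c = cint q n d" by (intro cint_cong) auto
  then show ?thesis using cint_nest[OF assms(1,3)] by auto
next
  case False
  define p where "p = (LEAST k. k \<in> {1..n} \<and> c k \<noteq> d k)"
  have ex: "\<exists>k. k \<in> {1..n} \<and> c k \<noteq> d k" using False by auto
  have p0: "p \<in> {1..n} \<and> c p \<noteq> d p" unfolding p_def by (rule LeastI_ex[OF ex])
  then have p: "p \<in> {1..n}" "c p \<noteq> d p" by auto
  have lt: "\<And>k. k \<in> {1..<p} \<Longrightarrow> c k = d k"
  proof -
    fix k assume k: "k \<in> {1..<p}"
    then have "\<not> (k \<in> {1..n} \<and> c k \<noteq> d k)" unfolding p_def by (intro not_less_Least) (auto simp: p_def)
    then show "c k = d k" using k p(1) by auto
  qed
  obtain p' where p': "p = Suc p'" using p(1) by (cases p) auto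
  have agree: "\<And>k. k \<in> {1..p'} \<Longrightarrow> c k = d k" using lt p' by auto
  have vc: "valid N (Suc p') c" using assms(2) p(1) p' valid_mono by auto
  have vd: "valid N (Suc p') d" using assms(3,1) p(1) p' valid_mono by (metis atLeastAtMost_iff le_trans)
  have disj: "cint q (Suc p') c \<inter> cint q (Suc p') d = {}"
  proof (cases "c p < d p")
    case True then show ?thesis using cint_sibling[OF vc vd agree] p' by auto
  next
    case False
    then have "d p < c p" using p(2) by simp
    then show ?thesis using cint_sibling[OF vd vc] agree p' by (metis inf_commute)
  qed
  have "cint q n c \<subseteq> cint q (Suc p') c" using cint_nest[of "Suc p'" n c] p p' assms(2) by auto
  moreover have "cint q m d \<subseteq> cint q (Suc p') d" using cint_nest[of "Suc p'" m d] p p' assms(1,3) by auto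
  ultimately show ?thesis using disj by blast
qed

lemma cyl_interiors_iff:
  "A \<in> cyl_interiors N q \<longleftrightarrow> (\<exists>n c. n \<ge> 1 \<and> valid N n c \<and> A = cint q n c)"
  unfolding cyl_interiors_def cint_def valid_def by auto

lemma laminar:
  assumes "A \<in> cyl_interiors N q" "B \<in> cyl_interiors N q"
  shows "A \<subseteq> B \<or> B \<subseteq> A \<or> A \<inter> B = {}"
proof -
  obtain n c where A: "valid N n c" "A = cint q n c" using assms(1) cyl_interiors_iff by auto
  obtain m d where B: "valid N m d" "B = cint q m d" using assms(2) cyl_interiors_iff by auto
  show ?thesis
  proof (cases "n \<le> m")
    case True then show ?thesis using cint_laminar_le[OF True A(1) B(1)] A B by auto
  next
    case False then show ?thesis using cint_laminar_le[of m n d c] A B by (auto simp: inf_commute)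
  qed
qed

lemma ilen_cint: "valid N n c \<Longrightarrow> ilen (cint q n c) = cyl_len q n c"
  unfolding cint_def using cyl_len_pos by (simp add: ilen_def)

lemma cyl_interiors_open: "cyl_interiors N q \<subseteq> open_intervals"
  unfolding open_intervals_def using cyl_len_pos by (force simp: cyl_interiors_iff cint_def)

lemma cyl_len_tendsto:
  assumes "\<forall>k\<ge>1. i k < N k"
  shows "(\<lambda>n. cyl_len q n i) \<longlonglongrightarrow> 0"
proof -
  have M: "(\<lambda>n. \<Prod>k\<in>{1..n}. Max ((\<lambda>j. q j k) ` {..<N k})) \<longlonglongrightarrow> 0"
    using Q by (simp add: Qexp_def)
  have v: "\<And>n. valid N n i" using assms by (simp add: valid_def)
  show ?thesis
  proof (rule tendsto_sandwich[of "\<lambda>_. 0" _ _ "\<lambda>n. \<Prod>k\<in>{1..n}. Max ((\<lambda>j. q j k) ` {..<N k})"])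
    show "\<forall>\<^sub>F n in sequentially. 0 \<le> cyl_len q n i" using cyl_len_pos[OF v] by (intro always_eventually allI less_imp_le) auto
    show "\<forall>\<^sub>F n in sequentially. cyl_len q n i \<le> (\<Prod>k\<in>{1..n}. Max ((\<lambda>j. q j k) ` {..<N k}))"
    proof (intro always_eventually allI)
      fix n
      show "cyl_len q n i \<le> (\<Prod>k\<in>{1..n}. Max ((\<lambda>j. q j k) ` {..<N k}))"
        unfolding cyl_len_def
      proof (rule prod_mono)
        fix k assume k: "k \<in> {1..n}"
        then have "i k < N k" using assms by auto
        then show "0 \<le> q (i k) k \<and> q (i k) k \<le> Max ((\<lambda>j. q j k) ` {..<N k})"
          using q_pos[of k "i k"] k by (auto intro!: Max_ge less_imp_le)
      qed
    qed
  qed (use M in auto)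
qed

end

definition cyl_ends :: "(nat \<Rightarrow> nat) \<Rightarrow> (nat \<Rightarrow> nat \<Rightarrow> real) \<Rightarrow> real set" where
  "cyl_ends N q = {0,1} \<union> {y. \<exists>n c. valid N n c \<and> y = cyl_left q n c}"

lemma countable_ends: "countable (cyl_ends N q)"
proof -
  have "{y. \<exists>n c. valid N n c \<and> y = cyl_left q n c}
        \<subseteq> (\<Union>n. (\<lambda>c. cyl_left q n c) ` (PiE {1..n} (\<lambda>k. {..<N k})))"
  proof
    fix y assume "y \<in> {y. \<exists>n c. valid N n c \<and> y = cyl_left q n c}"
    then obtain n c where nc: "valid N n c" "y = cyl_left q n c" by auto
    have "restrict c {1..n} \<in> PiE {1..n} (\<lambda>k. {..<N k})" using nc(1) by (auto simp: valid_def restrict_PiE_iff)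
    moreover have "cyl_left q n (restrict c {1..n}) = cyl_left q n c" by (rule cyl_cong) auto
    ultimately show "y \<in> (\<Union>n. (\<lambda>c. cyl_left q n c) ` (PiE {1..n} (\<lambda>k. {..<N k})))"
      using nc(2) by (intro UN_I[of n] image_eqI[of y _ "restrict c {1..n}"]) auto
  qed
  moreover have "countable (\<Union>n. (\<lambda>c. cyl_left q n c) ` (PiE {1..n} (\<lambda>k. {..<N k})))"
    by (rule countable_UN) (auto intro!: countable_image countable_finite finite_PiE)
  ultimately show ?thesis unfolding cyl_ends_def by (auto intro: countable_subset)
qed

context
  fixes N :: "nat \<Rightarrow> nat" and q :: "nat \<Rightarrow> nat \<Rightarrow> real"
  assumes Q: "Qexp N q"
begin

lemma digit_step:
  assumes v: "valid N n c" and x: "x \<in> cint q n c" and ne: "x \<notin> cyl_ends N q"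
  shows "\<exists>d < N (Suc n). x \<in> cint q (Suc n) (c(Suc n := d))"
proof -
  define k where "k = Suc n"
  define a where "a = cyl_left q n c"
  define L where "L = cyl_len q n c"
  define p where "p j = a + beta q j k * L" for j
  have L: "L > 0" using cyl_len_pos[OF Q v] by (simp add: L_def)
  have k1: "k \<ge> 1" by (simp add: k_def)
  have Nk: "N k \<ge> 2" using N_ge2[OF Q k1] .
  have xa: "a < x" "x < a + L" using x by (auto simp: cint_def a_def L_def)
  have cong: "\<And>d. cyl_left q n (c(k := d)) = a \<and> cyl_len q n (c(k := d)) = L"
    using cyl_cong[of n "c(k:=_)" c q] by (auto simp: k_def a_def L_def)
  have cint_d: "\<And>d. cint q (Suc n) (c(Suc n := d)) = {p d <..< p (Suc d)}"
  proof -
    fix d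
    have "cyl_left q (Suc n) (c(Suc n := d)) = p d"
      using cong[of d] by (simp add: cyl_left_Suc p_def k_def)
    moreover have "cyl_left q (Suc n) (c(Suc n := d)) + cyl_len q (Suc n) (c(Suc n := d)) = p (Suc d)"
      using cong[of d] by (simp add: cyl_left_Suc cyl_len_Suc p_def k_def beta_Suc algebra_simps)
    ultimately show "cint q (Suc n) (c(Suc n := d)) = {p d <..< p (Suc d)}"
      unfolding cint_def by simp
  qed
  define S where "S = {j. j < N k \<and> p j < x}"
  have finS: "finite S" unfolding S_def by simp
  have "0 \<in> S" using Nk xa by (simp add: S_def p_def beta_def)
  then have neS: "S \<noteq> {}" by blast
  define d where "d = Max S"
  have dS: "d \<in> S" using Max_in[OF finS neS] by (simp add: d_def)
  then have d: "d < N k" "p d < x" by (auto simp: S_def)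
  have "x < p (Suc d)"
  proof (cases "Suc d < N k")
    case True
    have "Suc d \<notin> S" using Max_ge[OF finS, of "Suc d"] by (auto simp: d_def)
    then have le: "x \<le> p (Suc d)" using True by (auto simp: S_def)
    have "valid N (Suc n) (c(Suc n := Suc d))" using v True by (auto simp: valid_def k_def)
    moreover have "cyl_left q (Suc n) (c(Suc n := Suc d)) = p (Suc d)"
      using cong[of "Suc d"] by (simp add: cyl_left_Suc p_def k_def)
    ultimately have "p (Suc d) \<in> cyl_ends N q" unfolding cyl_ends_def
      by (intro UnI2 CollectI exI[of _ "Suc n"] exI[of _ "c(Suc n := Suc d)"]) auto
    then show ?thesis using le ne by (cases "x = p (Suc d)") auto
  next
    case False
    then have "Suc d = N k" using d by simp
    then show ?thesis using xa beta_N[OF Q k1] by (simp add: p_def)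
  qed
  then show ?thesis using d cint_d by (auto simp: k_def)
qed

lemma digits_exist:
  assumes x: "x \<in> {0..1}" "x \<notin> cyl_ends N q"
  shows "\<exists>i. (\<forall>k\<ge>1. i k < N k) \<and> (\<forall>n. x \<in> cint q n i)"
proof -
  have "\<forall>n c. \<exists>d. (valid N n c \<and> x \<in> cint q n c) \<longrightarrow> d < N (Suc n) \<and> x \<in> cint q (Suc n) (c(Suc n := d))"
    using digit_step[OF _ _ x(2)] by blast
  then obtain st where st: "\<And>n c. valid N n c \<Longrightarrow> x \<in> cint q n c \<Longrightarrow>
      st n c < N (Suc n) \<and> x \<in> cint q (Suc n) (c(Suc n := st n c))"
    by metis
  define cs where "cs = rec_nat (\<lambda>_. 0) (\<lambda>n c. c(Suc n := st n c))"
  have cs0: "cs 0 = (\<lambda>_. 0)" and csS: "\<And>n. cs (Suc n) = (cs n)(Suc n := st n (cs n))"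
    by (simp_all add: cs_def)
  have inv: "valid N n (cs n) \<and> x \<in> cint q n (cs n)" for n
  proof (induction n)
    case 0
    have "x \<noteq> 0" "x \<noteq> 1" using x by (auto simp: cyl_ends_def)
    then show ?case using x(1) by (auto simp: valid_def cint_def cs0)
  next
    case (Suc n)
    then have "st n (cs n) < N (Suc n)" "x \<in> cint q (Suc n) ((cs n)(Suc n := st n (cs n)))"
      using st by auto
    moreover have "valid N (Suc n) ((cs n)(Suc n := st n (cs n)))"
      using Suc calculation(1) by (auto simp: valid_def)
    ultimately show ?case unfolding csS by blast
  qed
  define i where "i k = cs k k" for k
  have agree: "\<And>k. k \<le> n \<Longrightarrow> cs n k = i k" for n
  proof (induction n)
    case 0 then show ?case by (simp add: i_def)
  next
    case (Suc n) then show ?case by (cases "k = Suc n") (auto simp: csS i_def)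
  qed
  have "\<forall>k\<ge>1. i k < N k"
  proof (intro allI impI)
    fix k :: nat assume "k \<ge> 1"
    then show "i k < N k" using inv[of k] by (auto simp: valid_def i_def)
  qed
  moreover have "\<forall>n. x \<in> cint q n i"
  proof
    fix n
    have "cint q n i = cint q n (cs n)" by (rule cint_cong) (use agree in auto)
    then show "x \<in> cint q n i" using inv[of n] by simp
  qed
  ultimately show ?thesis by blast
qed

end

definition goodset :: "(nat \<Rightarrow> nat) \<Rightarrow> (nat \<Rightarrow> nat \<Rightarrow> real) \<Rightarrow> real \<Rightarrow> nat \<Rightarrow> real set" where
  "goodset N q ep n = {x. \<exists>i K. (\<forall>k\<ge>1. i k < N k) \<and> (\<forall>m. x \<in> cint q m i) \<and> K \<ge> 2 \<and>
      (\<forall>k\<ge>K. cyl_len q (k-1) i powr ep \<le> q (i k) k) \<and> 1 / real (Suc n) \<le> cyl_len q (K-1) i}"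

context
  fixes N :: "nat \<Rightarrow> nat" and q :: "nat \<Rightarrow> nat \<Rightarrow> real"
  assumes Q: "Qexp N q"
begin

lemma choose_J:
  assumes x: "x \<in> goodset N q ep n" and ep: "ep \<ge> 0"
    and d: "0 < d" "d < 1 / real (Suc n)"
  shows "\<exists>J \<in> cyl_interiors N q. x \<in> J \<and> ilen J \<le> d \<and> d powr (1 + ep) \<le> ilen J"
proof -
  obtain i K where iK: "\<forall>k\<ge>1. i k < N k" "\<forall>m. x \<in> cint q m i" "K \<ge> 2"
    "\<forall>k\<ge>K. cyl_len q (k-1) i powr ep \<le> q (i k) k" "1 / real (Suc n) \<le> cyl_len q (K-1) i"
    using x unfolding goodset_def by blast
  have v: "\<And>m. valid N m i" using iK(1) by (simp add: valid_def)
  have "\<forall>\<^sub>F m in sequentially. cyl_len q m i < d"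
    using order_tendstoD(2)[OF cyl_len_tendsto[OF Q iK(1)] d(1)] .
  then obtain m0 where "cyl_len q m0 i < d" by (auto simp: eventually_sequentially)
  then have ex: "\<exists>m. cyl_len q m i \<le> d" by (auto intro: less_imp_le)
  define m where "m = (LEAST m. cyl_len q m i \<le> d)"
  have m: "cyl_len q m i \<le> d" unfolding m_def by (rule LeastI_ex[OF ex])
  have d1: "d < 1"
  proof -
    have "1 / real (Suc n) \<le> 1" by simp
    then show ?thesis using d by linarith
  qed
  have "m \<noteq> 0"
  proof
    assume "m = 0"
    then show False using m d1 by simp
  qed
  then obtain p where p: "m = Suc p" by (cases m) auto
  have Lp: "d < cyl_len q p i"
  proof -
    have "p < m" using p by simp
    then have "\<not> cyl_len q p i \<le> d" unfolding m_def by (rule not_less_Least)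
    then show ?thesis by simp
  qed
  have mK: "m \<ge> K"
  proof (rule ccontr)
    assume "\<not> m \<ge> K"
    then have "m \<le> K - 1" by simp
    then have "cyl_len q (K-1) i \<le> cyl_len q m i" using cyl_len_antimono[OF Q _ v] by blast
    then show False using m d iK(5) by linarith
  qed
  then have qm: "cyl_len q p i powr ep \<le> q (i m) m" using iK(4) p by auto
  have Lpos: "cyl_len q p i > 0" using cyl_len_pos[OF Q v] .
  have "d powr (1 + ep) \<le> cyl_len q p i powr (1 + ep)"
    using d Lp ep by (intro powr_mono2) auto
  also have "\<dots> = cyl_len q p i * cyl_len q p i powr ep" using Lpos by (simp add: powr_add)
  also have "\<dots> \<le> cyl_len q p i * q (i m) m" using qm Lpos by (intro mult_left_mono) auto
  also have "\<dots> = cyl_len q m i" by (simp add: p cyl_len_Suc)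
  finally have low: "d powr (1 + ep) \<le> cyl_len q m i" .
  have mem: "cint q m i \<in> cyl_interiors N q"
    unfolding cyl_interiors_iff[OF Q] using v[of m] p by auto
  show ?thesis
    using mem iK(2) m low ilen_cint[OF Q v] by (intro bexI[OF _ mem]) auto
qed

lemma decompose:
  assumes H: "\<And>i :: nat \<Rightarrow> nat. (\<forall>k\<ge>1. i k < N k) \<Longrightarrow>
           (\<lambda>k. ln (q (i k) k) / ln (\<Prod>j\<in>{1..<k}. q (i j) j)) \<longlonglongrightarrow> 0"
    and ep: "ep > 0" and x: "x \<in> {0..1}" "x \<notin> cyl_ends N q"
  shows "\<exists>n. x \<in> goodset N q ep n"
proof -
  obtain i where i: "\<forall>k\<ge>1. i k < N k" "\<forall>m. x \<in> cint q m i"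
    using digits_exist[OF Q x] by blast
  have v: "\<And>m. valid N m i" using i(1) by (simp add: valid_def)
  have "\<forall>\<^sub>F k in sequentially. ln (q (i k) k) / ln (\<Prod>j\<in>{1..<k}. q (i j) j) < ep"
    using order_tendstoD(2)[OF H[OF i(1)] ep] .
  then obtain K0 where K0: "\<And>k. k \<ge> K0 \<Longrightarrow> ln (q (i k) k) / ln (\<Prod>j\<in>{1..<k}. q (i j) j) < ep"
    by (auto simp: eventually_sequentially)
  define K where "K = max K0 2"
  have K2: "K \<ge> 2" by (simp add: K_def)
  have good: "cyl_len q (k-1) i powr ep \<le> q (i k) k" if k: "k \<ge> K" for k
  proof -
    define P where "P = cyl_len q (k-1) i"
    have Pe: "(\<Prod>j\<in>{1..<k}. q (i j) j) = P"
    proof -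
      have "{1..<k} = {1..k-1}" using k K2 by auto
      then show ?thesis by (simp add: P_def cyl_len_def)
    qed
    have P0: "P > 0" using cyl_len_pos[OF Q v] by (simp add: P_def)
    have "P \<le> cyl_len q 1 i" unfolding P_def using k K2 by (intro cyl_len_antimono[OF Q _ v]) auto
    also have "cyl_len q 1 i = q (i 1) 1" by (simp add: cyl_len_def)
    also have "\<dots> < 1" using q_lt1[OF Q, of 1 "i 1"] i(1) by auto
    finally have P1: "P < 1" .
    have lnP: "ln P < 0" using P0 P1 by simp
    have qpos: "q (i k) k > 0" using q_pos[OF Q, of k "i k"] i(1) k K2 by auto
    have "ln (q (i k) k) / ln P < ep" using K0[of k] k Pe by (simp add: K_def)
    then have "ep * ln P < ln (q (i k) k)" using lnP by (simp add: neg_divide_less_eq mult.commute)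
    then have "exp (ep * ln P) < q (i k) k" using qpos by (metis exp_less_cancel_iff exp_ln)
    then show ?thesis using P0 by (simp add: P_def powr_def mult.commute)
  qed
  have "cyl_len q (K-1) i > 0" using cyl_len_pos[OF Q v] .
  then obtain n where n: "inverse (real (Suc n)) < cyl_len q (K-1) i"
    using reals_Archimedean by blast
  have "1 / real (Suc n) \<le> cyl_len q (K-1) i" using n by (simp add: inverse_eq_divide)
  then have "x \<in> goodset N q ep n"
    unfolding goodset_def using i K2 good by blast
  then show ?thesis by blast
qed

end

context
  fixes N :: "nat \<Rightarrow> nat" and q :: "nat \<Rightarrow> nat \<Rightarrow> real"
  assumes Q: "Qexp N q"
begin

lemma pe_compare:
  assumes T: "T \<subseteq> goodset N q ep n" and a: "0 \<le> a" and a': "(1 + ep) * a + eta \<le> a'"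
    and eta: "eta > 0" and ep: "ep \<ge> 0" and eps: "0 < eps" "eps < 1 / real (Suc n)"
    and C_def: "C = 49 / (1 - (1/2::real) powr eta)"
  shows "pack_eps open_intervals a' eps T
         \<le> ennreal C * pack_eps (cyl_interiors N q) a eps T"
proof -
  have r1: "(1/2::real) powr eta < 1"
  proof -
    have "(1/2::real) powr eta = 1 / 2 powr eta" by (simp add: powr_divide)
    moreover have "2 powr eta > 1" using eta by simp
    ultimately show ?thesis by simp
  qed
  have C: "C > 0" unfolding C_def using r1 by (intro divide_pos_pos) auto
  have eps1: "eps \<le> 1"
  proof -
    have "1 / real (Suc n) \<le> 1" by simp
    then show ?thesis using eps by linarith
  qed
  show ?thesis
  proof (cases "pack_eps (cyl_interiors N q) a eps T = top")
    case True
    have "ennreal C * top = top" using C by (simp add: ennreal_mult_top)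
    then show ?thesis using True by simp
  next
    case False
    then obtain P where P: "pack_eps (cyl_interiors N q) a eps T = ennreal P" "P \<ge> 0"
      by (cases "pack_eps (cyl_interiors N q) a eps T") auto
    have Pfin: "(\<Sum>J\<in>G. ilen J powr a) \<le> P" if G: "finite G" "packing (cyl_interiors N q) eps T G" for G
    proof -
      have "ennreal (\<Sum>J\<in>G. ilen J powr a) = (\<Sum>J\<in>G. ennreal (ilen J powr a))"
        by (rule sum_ennreal[symmetric]) auto
      also have "\<dots> = (\<Sum>\<^sub>\<infinity>J\<in>G. ennreal (ilen J powr a))" using G(1) by simp
      also have "\<dots> \<le> pack_eps (cyl_interiors N q) a eps T"
        unfolding pack_eps_def by (rule SUP_upper) (use G in auto)
      finally show ?thesis using P by (simp add: ennreal_le_iff)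
    qed
    have "pack_eps open_intervals a' eps T \<le> ennreal (C * P)"
      unfolding pack_eps_def
    proof (rule SUP_least)
      fix F assume "F \<in> {F. packing open_intervals eps T F}"
      then have F: "packing open_intervals eps T F" by simp
      show "(\<Sum>\<^sub>\<infinity>I\<in>F. ennreal (ilen I powr a')) \<le> ennreal (C * P)"
      proof (rule infsum_le_finite_sums)
        show "(\<lambda>I. ennreal (ilen I powr a')) summable_on F" by (rule nonneg_summable_on_complete) simp
        fix F' assume F': "finite F'" "F' \<subseteq> F"
        have Fp: "countable F \<and> F \<subseteq> open_intervals \<and> disjoint F \<and> (\<forall>I\<in>F. ilen I \<le> eps \<and> I \<inter> T \<noteq> {})"
          using F unfolding packing_def .
        have F'O: "F' \<subseteq> open_intervals" using Fp F'(2) by (meson order_trans)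
        have dF': "disjoint F'"
        proof -
          have "disjoint F" using Fp by simp
          then show ?thesis using F'(2) unfolding disjoint_def by (meson subsetD)
        qed
        have F'e: "\<And>I. I \<in> F' \<Longrightarrow> ilen I \<le> eps \<and> I \<inter> T \<noteq> {}"
          using Fp F'(2) by (meson subsetD)
        have "\<forall>I\<in>F'. \<exists>J. J \<in> cyl_interiors N q \<and> J \<inter> T \<noteq> {} \<and> J \<inter> I \<noteq> {} \<and> ilen J \<le> ilen I
                 \<and> ilen I powr a' \<le> ilen J powr a * ilen I powr eta"
        proof
          fix I assume I: "I \<in> F'"
          obtain l u where lu: "I = {l<..<u}" "l < u" using F'O I open_interval_cases by blast
          define d where "d = ilen I"
          have d: "0 < d" "d \<le> eps" using lu F'e[OF I] by (auto simp: d_def ilen_Ioo)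
          obtain x where x: "x \<in> I" "x \<in> T" using F'e[OF I] by blast
          have xg: "x \<in> goodset N q ep n" using T x(2) by blast
          have dn: "d < 1 / real (Suc n)" using d(2) eps(2) by linarith
          obtain J where J: "J \<in> cyl_interiors N q" "x \<in> J" "ilen J \<le> d" "d powr (1 + ep) \<le> ilen J"
            using choose_J[OF Q xg ep d(1) dn] by blast
          have "ilen I powr a' = d powr a'" by (simp add: d_def)
          also have "\<dots> \<le> d powr ((1 + ep) * a + eta)"
            using d eps1 a' by (intro powr_mono') auto
          also have "\<dots> = d powr ((1 + ep) * a) * d powr eta"
            by (rule powr_add)
          also have "\<dots> = (d powr (1 + ep)) powr a * d powr eta"
            by (simp only: powr_powr)
          also have "\<dots> \<le> ilen J powr a * d powr eta"
          proof (rule mult_right_mono)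
            show "(d powr (1 + ep)) powr a \<le> ilen J powr a"
              by (rule powr_mono2) (use J(4) a in auto)
          qed simp
          finally have w: "ilen I powr a' \<le> ilen J powr a * ilen I powr eta" by (simp only: d_def)
          show "\<exists>J. J \<in> cyl_interiors N q \<and> J \<inter> T \<noteq> {} \<and> J \<inter> I \<noteq> {} \<and> ilen J \<le> ilen I
                 \<and> ilen I powr a' \<le> ilen J powr a * ilen I powr eta"
          proof (intro exI[of _ J] conjI)
            show "J \<inter> T \<noteq> {}" using J(2) x(2) by blast
            show "J \<inter> I \<noteq> {}" using J(2) x(1) by blast
            show "ilen J \<le> ilen I" using J(3) by (simp add: d_def)
          qed (use J(1) w in auto)
        qed
        from bchoice[OF this] obtain g where g0: "\<forall>I\<in>F'. g I \<in> cyl_interiors N q \<and> g I \<inter> T \<noteq> {} \<and>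
            g I \<inter> I \<noteq> {} \<and> ilen (g I) \<le> ilen I \<and> ilen I powr a' \<le> ilen (g I) powr a * ilen I powr eta"
          by (elim exE)
        have g: "\<And>I. I \<in> F' \<Longrightarrow> g I \<in> cyl_interiors N q \<and> g I \<inter> T \<noteq> {} \<and>
            g I \<inter> I \<noteq> {} \<and> ilen (g I) \<le> ilen I \<and> ilen I powr a' \<le> ilen (g I) powr a * ilen I powr eta"
          using g0 by blast
        have lam: "\<And>A B. A \<in> cyl_interiors N q \<Longrightarrow> B \<in> cyl_interiors N q \<Longrightarrow> A \<subseteq> B \<or> B \<subseteq> A \<or> A \<inter> B = {}"
          using laminar[OF Q] by blast
        have "(\<Sum>I\<in>F'. ilen I powr a') \<le> C * P"
          unfolding C_def
        proof (rule comb[OF lam cyl_interiors_open[OF Q] F'(1) F'O dF' _ eps1 _ _ eta Pfin])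
          show "\<And>I. I \<in> F' \<Longrightarrow> ilen I \<le> eps" using F'e by blast
          show "\<And>I. I \<in> F' \<Longrightarrow> g I \<in> cyl_interiors N q \<and> g I \<inter> T \<noteq> {} \<and> g I \<inter> I \<noteq> {} \<and> ilen (g I) \<le> ilen I"
            using g by blast
          show "\<And>I. I \<in> F' \<Longrightarrow> ilen I powr a' \<le> ilen (g I) powr a * ilen I powr eta"
            using g by blast
        qed
        then have le: "ennreal (\<Sum>I\<in>F'. ilen I powr a') \<le> ennreal (C * P)" by (rule ennreal_leI)
        have eq: "(\<Sum>I\<in>F'. ennreal (ilen I powr a')) = ennreal (\<Sum>I\<in>F'. ilen I powr a')"
          by (rule sum_ennreal) auto
        show "(\<Sum>I\<in>F'. ennreal (ilen I powr a')) \<le> ennreal (C * P)" unfolding eq by (rule le)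
      qed
    qed
    also have "ennreal (C * P) = ennreal C * pack_eps (cyl_interiors N q) a eps T"
      using P C by (subst ennreal_mult) auto
    finally show ?thesis .
  qed
qed

lemma p0_compare:
  assumes T: "T \<subseteq> goodset N q ep n" and a: "0 \<le> a" and a': "(1 + ep) * a + eta \<le> a'"
    and eta: "eta > 0" and ep: "ep \<ge> 0" and C: "C = 49 / (1 - (1/2::real) powr eta)"
  shows "pack_0 open_intervals a' T \<le> ennreal C * pack_0 (cyl_interiors N q) a T"
proof -
  have r1: "(1/2::real) powr eta < 1"
  proof -
    have "(1/2::real) powr eta = 1 / 2 powr eta" by (simp add: powr_divide)
    moreover have "2 powr eta > 1" using eta by simp
    ultimately show ?thesis by simp
  qed
  have Cp: "C > 0" unfolding C using r1 by (intro divide_pos_pos) auto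
  define e0 where "e0 = 1 / (2 * real (Suc n))"
  have e0: "0 < e0" "e0 < 1 / real (Suc n)" by (auto simp: e0_def field_simps)
  define Y where "Y = pack_0 (cyl_interiors N q) a T"
  have key: "\<And>eps. 0 < eps \<Longrightarrow> pack_0 open_intervals a' T \<le> ennreal C * pack_eps (cyl_interiors N q) a eps T"
  proof -
    fix eps :: real assume eps: "0 < eps"
    define eps' where "eps' = min eps e0"
    have eps': "0 < eps'" "eps' < 1 / real (Suc n)" "eps' \<le> eps" using eps e0 by (auto simp: eps'_def)
    have "pack_0 open_intervals a' T \<le> pack_eps open_intervals a' eps' T"
      by (rule pack_0_le_eps) (use eps' in simp)
    also have "\<dots> \<le> ennreal C * pack_eps (cyl_interiors N q) a eps' T"
      using pe_compare[OF T a a' eta ep eps'(1,2) C] .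
    also have "\<dots> \<le> ennreal C * pack_eps (cyl_interiors N q) a eps T"
      by (intro mult_left_mono pack_eps_mono_eps eps'(3)) auto
    finally show "pack_0 open_intervals a' T \<le> ennreal C * pack_eps (cyl_interiors N q) a eps T" .
  qed
  show ?thesis
  proof (rule ennreal_le_epsilon)
    fix e :: real assume lt: "ennreal C * pack_0 (cyl_interiors N q) a T < top" and e: "0 < e"
    have "Y < top"
    proof (rule ccontr)
      assume "\<not> Y < top"
      then have "Y = top" using top.not_eq_extremum by blast
      then have "ennreal C * Y = top" using Cp by (simp add: ennreal_mult_top)
      then show False using lt by (simp add: Y_def)
    qed
    then obtain y where y: "Y = ennreal y" "y \<ge> 0" using less_top_ennreal by blast
    have "Y < ennreal (y + e / C)" using y e Cp by (simp add: ennreal_less_iff)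
    then have "(INF eps\<in>{0<..}. pack_eps (cyl_interiors N q) a eps T) < ennreal (y + e / C)"
      by (simp add: Y_def pack_0_def)
    then obtain eps where eps: "eps > 0" "pack_eps (cyl_interiors N q) a eps T < ennreal (y + e / C)"
      by (auto simp: INF_less_iff)
    have "pack_0 open_intervals a' T \<le> ennreal C * pack_eps (cyl_interiors N q) a eps T"
      using key[OF eps(1)] .
    also have "\<dots> \<le> ennreal C * ennreal (y + e / C)"
      using eps(2) by (intro mult_left_mono) auto
    also have "\<dots> = ennreal (C * (y + e / C))" using Cp y e by (subst ennreal_mult) auto
    also have "C * (y + e / C) = C * y + e" using Cp by (simp add: field_simps)
    also have "ennreal (C * y + e) = ennreal (C * y) + ennreal e"
      using Cp y e by (subst ennreal_plus) auto
    also have "ennreal (C * y) = ennreal C * Y"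
      using Cp y by (subst ennreal_mult) auto
    finally show "pack_0 open_intervals a' T \<le> ennreal C * pack_0 (cyl_interiors N q) a T + ennreal e"
      by (simp add: Y_def)
  qed
qed

lemma core_zero:
  assumes S: "S \<subseteq> goodset N q ep n" and a: "0 \<le> a" and a': "(1 + ep) * a + eta \<le> a'"
    and eta: "eta > 0" and ep: "ep \<ge> 0"
    and z: "pack_measure (cyl_interiors N q) a S = 0"
  shows "pack_measure open_intervals a' S = 0"
proof -
  define C where "C = 49 / (1 - (1/2::real) powr eta)"
  have r1: "(1/2::real) powr eta < 1"
  proof -
    have "(1/2::real) powr eta = 1 / 2 powr eta" by (simp add: powr_divide)
    moreover have "2 powr eta > 1" using eta by simp
    ultimately show ?thesis by simp
  qed
  have Cp: "C > 0" unfolding C_def using r1 by (intro divide_pos_pos) auto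
  show ?thesis
  proof (rule ennreal_zero_if_le_eps)
    fix e :: real assume e: "e > 0"
    have "pack_measure (cyl_interiors N q) a S < ennreal (e / C)" using z e Cp by simp
    then obtain Cv where Cv: "S \<subseteq> (\<Union>j. Cv j)" "(\<Sum>j. pack_0 (cyl_interiors N q) a (Cv j)) < ennreal (e / C)"
      using pack_measure_lt by blast
    have cov: "S \<subseteq> (\<Union>j. Cv j \<inter> S)" using Cv(1) by auto
    have "pack_measure open_intervals a' S \<le> (\<Sum>j. pack_0 open_intervals a' (Cv j \<inter> S))"
      by (rule pack_measure_le[OF cov])
    also have "\<dots> \<le> (\<Sum>j. ennreal C * pack_0 (cyl_interiors N q) a (Cv j))"
    proof (rule suminf_le)
      fix j
      have "pack_0 open_intervals a' (Cv j \<inter> S) \<le> ennreal C * pack_0 (cyl_interiors N q) a (Cv j \<inter> S)"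
        by (rule p0_compare[OF _ a a' eta ep C_def]) (use S in auto)
      also have "\<dots> \<le> ennreal C * pack_0 (cyl_interiors N q) a (Cv j)"
        by (intro mult_left_mono pack_0_mono_set) auto
      finally show "pack_0 open_intervals a' (Cv j \<inter> S) \<le> ennreal C * pack_0 (cyl_interiors N q) a (Cv j)" .
    qed auto
    also have "\<dots> = ennreal C * (\<Sum>j. pack_0 (cyl_interiors N q) a (Cv j))" by simp
    also have "\<dots> \<le> ennreal C * ennreal (e / C)" using Cv(2) by (intro mult_left_mono) auto
    also have "\<dots> = ennreal e" using Cp e by (subst ennreal_mult[symmetric]) auto
    finally show "pack_measure open_intervals a' S \<le> ennreal e" .
  qed
qed

end

theorem lemma1:
  fixes N :: "nat \<Rightarrow> nat" and q :: "nat \<Rightarrow> nat \<Rightarrow> real"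
  assumes "Qexp N q"
    and "\<And>i :: nat \<Rightarrow> nat. (\<forall>k\<ge>1. i k < N k) \<Longrightarrow>
           (\<lambda>k. ln (q (i k) k) / ln (\<Prod>j\<in>{1..<k}. q (i j) j)) \<longlonglongrightarrow> 0"
  shows "\<forall>E. E \<subseteq> {0..1} \<longrightarrow>
           pack_dim (cyl_interiors N q) E = pack_dim open_intervals E"
proof (intro allI impI)
  fix E :: "real set" assume E: "E \<subseteq> {0..1}"
  have Q: "Qexp N q" using assms(1) .
  define AP where "AP = {\<alpha>. 0 \<le> \<alpha> \<and> pack_measure (cyl_interiors N q) \<alpha> E = 0}"
  define AO where "AO = {\<alpha>. 0 \<le> \<alpha> \<and> pack_measure open_intervals \<alpha> E = 0}"
  have sub: "AO \<subseteq> AP"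
  proof
    fix \<alpha> assume "\<alpha> \<in> AO"
    then have a: "0 \<le> \<alpha>" "pack_measure open_intervals \<alpha> E = 0" by (auto simp: AO_def)
    have "pack_measure (cyl_interiors N q) \<alpha> E \<le> pack_measure open_intervals \<alpha> E"
      by (rule pack_measure_mono_adm[OF cyl_interiors_open[OF Q]])
    then show "\<alpha> \<in> AP" using a by (simp add: AP_def)
  qed
  have up: "\<alpha>' \<in> AO" if "\<alpha> \<in> AP" "\<alpha> < \<alpha>'" for \<alpha> \<alpha>'
  proof -
    have a: "0 \<le> \<alpha>" and z: "pack_measure (cyl_interiors N q) \<alpha> E = 0" using that(1) by (auto simp: AP_def)
    have lt: "\<alpha> < \<alpha>'" using that(2) .
    define ep where "ep = (\<alpha>' - \<alpha>) / (2 * (\<alpha> + 1))"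
    define eta where "eta = (\<alpha>' - \<alpha>) / 2"
    have ep: "ep > 0" using a lt by (simp add: ep_def)
    have eta: "eta > 0" using lt by (simp add: eta_def)
    have a': "(1 + ep) * \<alpha> + eta \<le> \<alpha>'"
    proof -
      have "ep * \<alpha> = (\<alpha>' - \<alpha>) / 2 * (\<alpha> / (\<alpha> + 1))" using a by (simp add: ep_def field_simps)
      also have "\<dots> \<le> (\<alpha>' - \<alpha>) / 2 * 1"
        using a lt by (intro mult_left_mono) auto
      finally have h: "ep * \<alpha> \<le> (\<alpha>' - \<alpha>) / 2" by simp
      have "(1 + ep) * \<alpha> + eta = \<alpha> + ep * \<alpha> + (\<alpha>' - \<alpha>) / 2" by (simp add: eta_def algebra_simps)
      also have "\<dots> \<le> \<alpha> + (\<alpha>' - \<alpha>) / 2 + (\<alpha>' - \<alpha>) / 2"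
        using h by (intro add_right_mono add_left_mono)
      also have "\<dots> = \<alpha>'" by simp
      finally show ?thesis .
    qed
    have a'pos: "\<alpha>' > 0" using a lt by linarith
    define S1 where "S1 = (\<Union>d\<in>E \<inter> cyl_ends N q. {d})"
    define S2 where "S2 = (\<Union>n. E \<inter> goodset N q ep n)"
    have S1: "pack_measure open_intervals \<alpha>' S1 = 0"
      unfolding S1_def
    proof (rule pm_countable_zero)
      show "countable (E \<inter> cyl_ends N q)" using countable_ends by (rule countable_subset[rotated]) auto
      show "\<And>d. d \<in> E \<inter> cyl_ends N q \<Longrightarrow> pack_measure open_intervals \<alpha>' {d} = 0"
        using pm_singleton[OF a'pos] by blast
    qed
    have S2: "pack_measure open_intervals \<alpha>' S2 = 0"
      unfolding S2_def
    proof (rule pm_union_zero)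
      fix n
      have "pack_measure (cyl_interiors N q) \<alpha> (E \<inter> goodset N q ep n) \<le> pack_measure (cyl_interiors N q) \<alpha> E"
        by (rule pack_measure_mono_set) auto
      then have z': "pack_measure (cyl_interiors N q) \<alpha> (E \<inter> goodset N q ep n) = 0" using z by simp
      show "pack_measure open_intervals \<alpha>' (E \<inter> goodset N q ep n) = 0"
        by (rule core_zero[OF Q _ a a' eta _ z']) (use ep in auto)
    qed
    have cov: "E \<subseteq> S1 \<union> S2"
    proof
      fix x assume x: "x \<in> E"
      show "x \<in> S1 \<union> S2"
      proof (cases "x \<in> cyl_ends N q")
        case True then show ?thesis using x by (auto simp: S1_def)
      next
        case False
        obtain n where "x \<in> goodset N q ep n"
          using decompose[OF Q assms(2) ep _ False] x E by blast
        then show ?thesis using x by (auto simp: S2_def)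
      qed
    qed
    have "pack_measure open_intervals \<alpha>' E \<le> pack_measure open_intervals \<alpha>' (S1 \<union> S2)"
      by (rule pack_measure_mono_set[OF cov])
    also have "\<dots> = 0" by (rule pm_Un_zero[OF S1 S2])
    finally show ?thesis using a'pos by (simp add: AO_def)
  qed
  have bddP: "bdd_below AP" unfolding AP_def by (rule bdd_belowI[of _ 0]) auto
  have bddO: "bdd_below AO" unfolding AO_def by (rule bdd_belowI[of _ 0]) auto
  have "Inf AP = Inf AO"
  proof (cases "AP = {}")
    case True
    then have "AO = {}" using sub by blast
    then show ?thesis using True by simp
  next
    case False
    then obtain \<alpha>0 where "\<alpha>0 \<in> AP" by blast
    then have "\<alpha>0 + 1 \<in> AO" using up by simp
    then have neO: "AO \<noteq> {}" by blast
    have le1: "Inf AP \<le> Inf AO" by (rule cInf_superset_mono[OF neO bddP sub])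
    have le2: "Inf AO \<le> Inf AP"
    proof (rule cInf_greatest[OF False])
      fix \<alpha> assume \<alpha>: "\<alpha> \<in> AP"
      show "Inf AO \<le> \<alpha>"
      proof (rule dense_ge)
        fix y assume "\<alpha> < y"
        then have "y \<in> AO" using up[OF \<alpha>] by blast
        then show "Inf AO \<le> y" by (rule cInf_lower[OF _ bddO])
      qed
    qed
    show ?thesis using le1 le2 by simp
  qed
  then show "pack_dim (cyl_interiors N q) E = pack_dim open_intervals E"
    by (simp add: pack_dim_def AP_def AO_def)
qed

end
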